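(* Let $0<R_0,T<\infty$ and let $h:(0,R_0)\times(0,T)\to\mathbb R$ be a smooth function. Define the relative entropy $\mathfrak H(h):=\log\big[(1+h)^2(1+h+xh_x)\big]$. There exist $\varepsilon_*\in(0,1)$ and a constant $C>0$ such that, if for some $0<\varepsilon<\varepsilon_*$ $$\max\Big\{\sup_{x,t}|h|,\ \sup_{x,t}|xh_x|,\ \sup_{x,t}|h_t|,\ \sup_{x,t}|xh_{xt}|\Big\}<\varepsilon,$$ then for every $t\in(0,T)$ $$\int_0^{R_0}\big(h_x^2+x^2h_{xx}^2\big)\,dx\le C\int_0^{R_0}\mathfrak H(h)_x^2\,dx,$$ $$\int_0^{R_0}\big(h_{xt}^2+x^2h_{xxt}^2\big)\,dx\le C\int_0^{R_0}\mathfrak H(h)_{xt}^2\,dx+C\varepsilon\int_0^{R_0}\big(h_x^2+x^2h_{xx}^2\big)\,dx.$$ *)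

theory Defs
  imports "HOL-Analysis.Analysis"
begin

definition dx :: "(real \<Rightarrow> real \<Rightarrow> real) \<Rightarrow> real \<Rightarrow> real \<Rightarrow> real" where
  "dx g = (\<lambda>x t. deriv (\<lambda>y. g y t) x)"

definition dt :: "(real \<Rightarrow> real \<Rightarrow> real) \<Rightarrow> real \<Rightarrow> real \<Rightarrow> real" where
  "dt g = (\<lambda>x t. deriv (\<lambda>s. g x s) t)"

definition iter_partial :: "bool list \<Rightarrow> (real \<Rightarrow> real \<Rightarrow> real) \<Rightarrow> real \<Rightarrow> real \<Rightarrow> real" where
  "iter_partial ws h = foldr (\<lambda>b g. if b then dx g else dt g) ws h"

definition smooth_on_rect :: "real \<Rightarrow> real \<Rightarrow> (real \<Rightarrow> real \<Rightarrow> real) \<Rightarrow> bool" where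
  "smooth_on_rect R0 T h \<longleftrightarrow>
     (\<forall>ws. continuous_on ({0<..<R0} \<times> {0<..<T}) (\<lambda>(x, t). iter_partial ws h x t) \<and>
       (\<forall>x\<in>{0<..<R0}. \<forall>t\<in>{0<..<T}.
          (\<lambda>y. iter_partial ws h y t) differentiable (at x) \<and>
          (\<lambda>s. iter_partial ws h x s) differentiable (at t)))"

definition rel_entropy :: "(real \<Rightarrow> real \<Rightarrow> real) \<Rightarrow> real \<Rightarrow> real \<Rightarrow> real" where
  "rel_entropy h = (\<lambda>x t. ln ((1 + h x t)^2 * (1 + h x t + x * dx h x t)))"

definition sup_abs :: "real \<Rightarrow> real \<Rightarrow> (real \<Rightarrow> real \<Rightarrow> real) \<Rightarrow> ereal" where
  "sup_abs R0 T f = (SUP p\<in>{0<..<R0} \<times> {0<..<T}. ereal \<bar>f (fst p) (snd p)\<bar>)"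

end

theory Submission
  imports Defs
begin



lemma ip_simps[simp]:
  "iter_partial [] h = h"
  "iter_partial (True # ws) h = dx (iter_partial ws h)"
  "iter_partial (False # ws) h = dt (iter_partial ws h)"
  by (simp_all add: iter_partial_def)

lemma smooth_cont:
  assumes "smooth_on_rect R T h" "t \<in> {0<..<T}"
  shows "continuous_on {0<..<R} (\<lambda>x. iter_partial ws h x t)"
proof -
  have c: "continuous_on ({0<..<R} \<times> {0<..<T}) (\<lambda>(x, t). iter_partial ws h x t)"
    using assms(1) unfolding smooth_on_rect_def by blast
  have "continuous_on {0<..<R} ((\<lambda>(x, t). iter_partial ws h x t) \<circ> (\<lambda>x. (x, t)))"
    using assms(2) by (intro continuous_on_compose) (auto intro!: continuous_intros continuous_on_subset[OF c])
  then show ?thesis by (simp add: o_def)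
qed

lemma smooth_dx:
  assumes "smooth_on_rect R T h" "x \<in> {0<..<R}" "t \<in> {0<..<T}"
  shows "((\<lambda>y. iter_partial ws h y t) has_real_derivative dx (iter_partial ws h) x t) (at x)"
proof -
  have "(\<lambda>y. iter_partial ws h y t) differentiable (at x)"
    using assms unfolding smooth_on_rect_def by blast
  then show ?thesis unfolding dx_def using DERIV_deriv_iff_real_differentiable by blast
qed

lemma smooth_dt:
  assumes "smooth_on_rect R T h" "x \<in> {0<..<R}" "t \<in> {0<..<T}"
  shows "((\<lambda>s. iter_partial ws h x s) has_real_derivative dt (iter_partial ws h) x t) (at t)"
proof -
  have "(\<lambda>s. iter_partial ws h x s) differentiable (at t)"
    using assms unfolding smooth_on_rect_def by blast
  then show ?thesis unfolding dt_def using DERIV_deriv_iff_real_differentiable by blast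
qed

lemma schwarz:
  fixes k kx kt m :: "real \<Rightarrow> real \<Rightarrow> real"
  assumes dk: "\<And>x t. x \<in> {0<..<R} \<Longrightarrow> t \<in> {0<..<T} \<Longrightarrow> ((\<lambda>y. k y t) has_real_derivative kx x t) (at x)"
    and dkt: "\<And>x t. x \<in> {0<..<R} \<Longrightarrow> t \<in> {0<..<T} \<Longrightarrow> ((\<lambda>s. k x s) has_real_derivative kt x t) (at t)"
    and dkx: "\<And>x t. x \<in> {0<..<R} \<Longrightarrow> t \<in> {0<..<T} \<Longrightarrow> ((\<lambda>s. kx x s) has_real_derivative m x t) (at t)"
    and ckx: "continuous_on ({0<..<R} \<times> {0<..<T}) (\<lambda>(x, t). kx x t)"
    and cm: "continuous_on ({0<..<R} \<times> {0<..<T}) (\<lambda>(x, t). m x t)"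
    and xz: "xz \<in> {0<..<R}" and tz: "tz \<in> {0<..<T}"
  shows "((\<lambda>y. kt y tz) has_real_derivative m xz tz) (at xz)"
proof -
  define a where "a = xz / 2"
  have a: "0 < a" "a < xz" using xz by (auto simp: a_def)
  have ckx1: "continuous_on {a..x} (\<lambda>s. kx s t)" if "x < R" "t \<in> {0<..<T}" for x t
  proof -
    have "continuous_on {a..x} (\<lambda>s. (\<lambda>(x, t). kx x t) (s, t))"
    proof (rule continuous_on_compose2[OF ckx])
      show "continuous_on {a..x} (\<lambda>s. (s, t))" by (intro continuous_intros)
      show "(\<lambda>s. (s, t)) ` {a..x} \<subseteq> {0<..<R} \<times> {0<..<T}" using that a by force
    qed
    then show ?thesis by simp
  qed
  have cm1: "continuous_on {a..x} (\<lambda>s. m s t)" if "x < R" "t \<in> {0<..<T}" for x t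
  proof -
    have "continuous_on {a..x} (\<lambda>s. (\<lambda>(x, t). m x t) (s, t))"
    proof (rule continuous_on_compose2[OF cm])
      show "continuous_on {a..x} (\<lambda>s. (s, t))" by (intro continuous_intros)
      show "(\<lambda>s. (s, t)) ` {a..x} \<subseteq> {0<..<R} \<times> {0<..<T}" using that a by force
    qed
    then show ?thesis by simp
  qed
  have ftc: "k x t = k a t + integral {a..x} (\<lambda>s. kx s t)" if "a \<le> x" "x < R" "t \<in> {0<..<T}" for x t
  proof -
    have "((\<lambda>s. kx s t) has_integral (k x t - k a t)) {a..x}"
    proof (rule fundamental_theorem_of_calculus[OF that(1)])
      fix y assume "y \<in> {a..x}"
      then have "y \<in> {0<..<R}" using a that by auto
      from dk[OF this that(3)] show "((\<lambda>y. k y t) has_vector_derivative kx y t) (at y within {a..x})"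
        by (simp add: has_real_derivative_iff_has_vector_derivative has_vector_derivative_at_within)
    qed
    then show ?thesis by (simp add: integral_unique)
  qed
  have leib: "((\<lambda>t. integral {a..x} (\<lambda>s. kx s t)) has_real_derivative integral {a..x} (\<lambda>s. m s tz)) (at tz)"
    if "a \<le> x" "x < R" for x
  proof -
    have cc: "continuous_on ({0<..<T} \<times> cbox a x) (\<lambda>(t, s). m s t)"
    proof -
      have "continuous_on ({0<..<T} \<times> cbox a x) (\<lambda>p. (\<lambda>(x, t). m x t) (snd p, fst p))"
      proof (rule continuous_on_compose2[OF cm])
        show "continuous_on ({0<..<T} \<times> cbox a x) (\<lambda>p. (snd p, fst p))"
          by (intro continuous_intros)
        show "(\<lambda>p. (snd p, fst p)) ` ({0<..<T} \<times> cbox a x) \<subseteq> {0<..<R} \<times> {0<..<T}"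
          using that a by force
      qed
      then show ?thesis by (simp add: split_beta)
    qed
    have "((\<lambda>t. integral (cbox a x) (\<lambda>s. kx s t)) has_field_derivative integral (cbox a x) (\<lambda>s. m s tz)) (at tz within {0<..<T})"
    proof (rule leibniz_rule_field_derivative[where fx="\<lambda>t s. m s t"])
      fix t s assume "t \<in> {0<..<T}" "s \<in> cbox a x"
      then have "s \<in> {0<..<R}" using a that by auto
      from dkx[OF this \<open>t \<in> _\<close>] show "((\<lambda>t. kx s t) has_field_derivative m s t) (at t within {0<..<T})"
        by (rule has_field_derivative_at_within)
    next
      fix t assume "t \<in> {0<..<T}"
      then show "(\<lambda>s. kx s t) integrable_on cbox a x"
        using integrable_continuous_interval[OF ckx1[OF that(2)]] by simp
    qed (rule cc, rule tz, rule convex_real_interval)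
    then show ?thesis using at_within_open[OF tz open_greaterThanLessThan] by (simp only: box_real)
  qed
  have kt_eq: "kt x tz = kt a tz + integral {a..x} (\<lambda>s. m s tz)" if "a \<le> x" "x < R" for x
  proof -
    have "a \<in> {0<..<R}" using a xz by auto
    have "((\<lambda>t. k a t + integral {a..x} (\<lambda>s. kx s t)) has_real_derivative kt a tz + integral {a..x} (\<lambda>s. m s tz)) (at tz)"
      by (intro DERIV_add dkt leib that \<open>a \<in> _\<close> tz)
    then have "((\<lambda>t. k x t) has_real_derivative kt a tz + integral {a..x} (\<lambda>s. m s tz)) (at tz)"
      by (rule has_field_derivative_transform_within_open[where S="{0<..<T}"]) (use tz ftc[OF that, symmetric] in auto)
    moreover have "((\<lambda>t. k x t) has_real_derivative kt x tz) (at tz)"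
      using that a tz by (intro dkt) auto
    ultimately show ?thesis using DERIV_unique by blast
  qed
  define b where "b = (xz + R) / 2"
  have b: "xz < b" "b < R" using xz by (auto simp: b_def)
  have "((\<lambda>u. integral {a..u} (\<lambda>s. m s tz)) has_vector_derivative m xz tz) (at xz within {a..b})"
    using integral_has_vector_derivative[OF cm1[OF b(2) tz], of xz] a b by auto
  then have D: "((\<lambda>u. integral {a..u} (\<lambda>s. m s tz)) has_real_derivative m xz tz) (at xz)"
    using a b by (simp add: at_within_Icc_at has_real_derivative_iff_has_vector_derivative)
  have "((\<lambda>u. kt a tz + integral {a..u} (\<lambda>s. m s tz)) has_real_derivative m xz tz) (at xz)"
    using DERIV_add[OF DERIV_const[of "kt a tz"] D] by simp
  then show ?thesis
    by (rule has_field_derivative_transform_within_open[where S="{a<..<R}"]) (use a xz in \<open>auto simp: kt_eq[symmetric]\<close>)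
qed




lemma P0:
  fixes a b u :: real
  assumes "\<bar>u\<bar> \<le> 1/10"
  shows "(a^2 + b^2)/2 + 4 * (b^2 + 2 * a * b) \<le> (a + (4 + u) * b)^2"
proof -
  have id: "(a + (4 + u) * b)^2 - ((a^2 + b^2)/2 + 4 * (b^2 + 2 * a * b)) = (a + 2 * u * b)^2/2 + (23/2 + 8 * u - u^2) * b^2"
    unfolding power2_eq_square by (simp add: field_simps)
  have "0 \<le> (1/10 - u) * (1/10 + u)" using assms by (intro mult_nonneg_nonneg) auto
  then have "u^2 \<le> 1" by (simp add: power2_eq_square algebra_simps)
  moreover have "-1/10 \<le> u" using assms by linarith
  ultimately have "0 \<le> 23/2 + 8 * u - u^2" by linarith
  then have "0 \<le> (23/2 + 8 * u - u^2) * b^2" by simp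
  moreover have "0 \<le> (a + 2 * u * b)^2/2" by simp
  ultimately show ?thesis using id by linarith
qed

lemma P2:
  fixes a b u :: real
  assumes "\<bar>u\<bar> \<le> 1/10"
  shows "4 * (3 * b^2 + 2 * a * b) \<le> (a + (4 + u) * b)^2"
proof -
  have id: "(a + (4 + u) * b)^2 - 4 * (3 * b^2 + 2 * a * b) = (a + u * b)^2 + (4 + 8 * u) * b^2"
    by (simp add: power2_eq_square algebra_simps)
  have "0 \<le> 4 + 8 * u" using assms by linarith
  then have "0 \<le> (4 + 8 * u) * b^2" by simp
  moreover have "0 \<le> (a + u * b)^2" by simp
  ultimately show ?thesis using id by linarith
qed

lemma small_limit:
  fixes X Y K :: real
  assumes "0 < a" "0 \<le> K" "\<And>e. 0 < e \<Longrightarrow> e < a \<Longrightarrow> X \<le> Y + e * K"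
  shows "X \<le> Y"
proof (rule ccontr)
  assume "\<not> X \<le> Y"
  then have d: "0 < X - Y" by simp
  define e where "e = min (a/2) ((X - Y) / (2 * K + 1))"
  have e: "0 < e" "e < a" using d assms(1,2) by (auto simp: e_def)
  have "e * K \<le> (X - Y) / (2 * K + 1) * K"
    using assms(2) by (intro mult_right_mono) (auto simp: e_def)
  also have "\<dots> < X - Y"
  proof -
    have "(X - Y) * K < (X - Y) * (2 * K + 1)" using d assms(2) by simp
    then show ?thesis using assms(2) by (simp add: divide_less_eq pos_divide_less_eq mult.commute)
  qed
  finally show False using assms(3)[OF e] by linarith
qed

lemma core_real:
  fixes v v' p :: "real \<Rightarrow> real"
  assumes der: "\<And>x. 0 < x \<Longrightarrow> x < R \<Longrightarrow> (v has_real_derivative v' x) (at x)"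
    and cv': "continuous_on {0<..<R} v'" and cp: "continuous_on {0<..<R} p"
    and pb: "\<And>x. 0 < x \<Longrightarrow> x < R \<Longrightarrow> \<bar>p x - 4\<bar> \<le> 1/10"
    and vb: "\<And>x. 0 < x \<Longrightarrow> x < R \<Longrightarrow> \<bar>x * v x\<bar> \<le> M"
    and Qb: "\<And>e b. 0 < e \<Longrightarrow> e \<le> b \<Longrightarrow> b < R \<Longrightarrow> integral {e..b} (\<lambda>x. (x * v' x + p x * v x)^2) \<le> Q"
    and eb: "0 < e" "e \<le> b" "b < R"
  shows "integral {e..b} (\<lambda>x. v x^2 + x^2 * v' x^2) \<le> 4 * Q"
proof -
  have cv: "continuous_on {0<..<R} v"
    by (rule continuous_at_imp_continuous_on) (metis DERIV_isCont der greaterThanLessThan_iff)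
  have sub: "continuous_on {e..b} f" if "0 < e" "b < R" "continuous_on {0<..<R} f" for e b and f :: "real \<Rightarrow> real"
    using that by (elim continuous_on_subset) auto
  define q where "q x = x * v' x + p x * v x" for x
  have cq: "continuous_on {0<..<R} q" unfolding q_def
    by (intro continuous_intros cv cv' cp)
  have pw0: "(v x^2 + x^2 * v' x^2)/2 + 4 * (v x^2 + 2 * x * v x * v' x) \<le> q x^2" if "0 < x" "x < R" for x
  proof -
    have "p x = 4 + (p x - 4)" by simp
    then have "q x = x * v' x + (4 + (p x - 4)) * v x" by (simp add: q_def)
    moreover have "((x * v' x)^2 + v x^2)/2 + 4 * (v x^2 + 2 * (x * v' x) * v x) \<le> (x * v' x + (4 + (p x - 4)) * v x)^2"
      by (rule P0) (use pb that in auto)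
    ultimately show ?thesis by (simp add: power_mult_distrib algebra_simps)
  qed
  have pw2: "4 * (3 * x^2 * v x^2 + 2 * x^3 * v x * v' x) \<le> x^2 * q x^2" if "0 < x" "x < R" for x
  proof -
    have "q x = x * v' x + (4 + (p x - 4)) * v x" by (simp add: q_def)
    moreover have "4 * (3 * v x^2 + 2 * (x * v' x) * v x) \<le> (x * v' x + (4 + (p x - 4)) * v x)^2"
      by (rule P2) (use pb that in auto)
    ultimately have "x^2 * (4 * (3 * v x^2 + 2 * (x * v' x) * v x)) \<le> x^2 * q x^2"
      by (intro mult_left_mono) auto
    then show ?thesis by (simp add: power2_eq_square power3_eq_cube algebra_simps)
  qed
  have ftc0: "integral {e..b} (\<lambda>x. v x^2 + 2 * x * v x * v' x) = b * v b^2 - e * v e^2"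
    if "0 < e" "e \<le> b" "b < R" for e b
  proof -
    have "((\<lambda>x. v x^2 + 2 * x * v x * v' x) has_integral ((\<lambda>x. x * v x^2) b - (\<lambda>x. x * v x^2) e)) {e..b}"
    proof (rule fundamental_theorem_of_calculus[OF that(2)])
      fix x assume x: "x \<in> {e..b}"
      then have "0 < x" "x < R" using that by auto
      have "((\<lambda>x. x * v x^2) has_real_derivative (1 * v x^2 + x * (2 * v x * v' x))) (at x)"
        using \<open>0<x\<close> \<open>x<R\<close> by (intro derivative_eq_intros) (auto intro: der)
      then show "((\<lambda>x. x * v x^2) has_vector_derivative v x^2 + 2 * x * v x * v' x) (at x within {e..b})"
        by (simp add: has_real_derivative_iff_has_vector_derivative[symmetric] algebra_simps has_field_derivative_at_within)
    qed
    then show ?thesis by (simp add: integral_unique)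
  qed
  have ftc2: "integral {e..b} (\<lambda>x. 3 * x^2 * v x^2 + 2 * x^3 * v x * v' x) = b^3 * v b^2 - e^3 * v e^2"
    if "0 < e" "e \<le> b" "b < R" for e b
  proof -
    have "((\<lambda>x. 3 * x^2 * v x^2 + 2 * x^3 * v x * v' x) has_integral ((\<lambda>x. x^3 * v x^2) b - (\<lambda>x. x^3 * v x^2) e)) {e..b}"
    proof (rule fundamental_theorem_of_calculus[OF that(2)])
      fix x assume x: "x \<in> {e..b}"
      then have "0 < x" "x < R" using that by auto
      have "((\<lambda>x. x^3 * v x^2) has_real_derivative (3 * x^2 * v x^2 + x^3 * (2 * v x * v' x))) (at x)"
        using \<open>0<x\<close> \<open>x<R\<close> by (intro derivative_eq_intros) (auto intro: der)
      then show "((\<lambda>x. x^3 * v x^2) has_vector_derivative 3 * x^2 * v x^2 + 2 * x^3 * v x * v' x) (at x within {e..b})"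
        by (simp add: has_real_derivative_iff_has_vector_derivative[symmetric] algebra_simps has_field_derivative_at_within)
    qed
    then show ?thesis by (simp add: integral_unique)
  qed
  have step1: "4 * (a * v a^2) \<le> Q" if a: "0 < a" "a < R" for a
  proof -
    have E: "4 * (a^3 * v a^2) \<le> a^2 * Q + e' * (4 * M^2)" if e': "0 < e'" "e' < a" for e'
    proof -
      have I1: "(\<lambda>x. 4 * (3 * x^2 * v x^2 + 2 * x^3 * v x * v' x)) integrable_on {e'..a}"
        by (intro integrable_continuous_interval sub[OF e'(1) a(2)] continuous_intros cv cv')
      have I2: "(\<lambda>x. x^2 * q x^2) integrable_on {e'..a}"
        by (intro integrable_continuous_interval sub[OF e'(1) a(2)] continuous_intros cq)
      have I3: "(\<lambda>x. a^2 * q x^2) integrable_on {e'..a}"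
        by (intro integrable_continuous_interval sub[OF e'(1) a(2)] continuous_intros cq)
      have "4 * (a^3 * v a^2 - e'^3 * v e'^2) = integral {e'..a} (\<lambda>x. 4 * (3 * x^2 * v x^2 + 2 * x^3 * v x * v' x))"
        using ftc2[of e' a] e' a by (simp only: integral_mult_right)
      also have "\<dots> \<le> integral {e'..a} (\<lambda>x. x^2 * q x^2)"
      proof (rule integral_le[OF I1 I2])
        fix x assume "x \<in> {e'..a}"
        then have "0 < x" "x < R" using e' a by auto
        from pw2[OF this] show "4 * (3 * x^2 * v x^2 + 2 * x^3 * v x * v' x) \<le> x^2 * q x^2" .
      qed
      also have "\<dots> \<le> integral {e'..a} (\<lambda>x. a^2 * q x^2)"
      proof (rule integral_le[OF I2 I3])
        fix x assume "x \<in> {e'..a}"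
        then have "x^2 \<le> a^2" using e' by (intro power_mono) auto
        then show "x^2 * q x^2 \<le> a^2 * q x^2" by (intro mult_right_mono) auto
      qed
      also have "\<dots> = a^2 * integral {e'..a} (\<lambda>x. q x^2)" by simp
      also have "\<dots> \<le> a^2 * Q"
        using Qb[of e' a] e' a by (intro mult_left_mono) (auto simp: q_def)
      finally have A: "4 * (a^3 * v a^2 - e'^3 * v e'^2) \<le> a^2 * Q" .
      have "e'^3 * v e'^2 = e' * (e' * v e')^2" by (simp add: power2_eq_square power3_eq_cube)
      also have "\<dots> \<le> e' * M^2"
      proof (intro mult_left_mono)
        have "\<bar>e' * v e'\<bar> \<le> M" using vb[of e'] e' a by auto
        then show "(e' * v e')^2 \<le> M^2"
          using power_mono[OF \<open>\<bar>e' * v e'\<bar> \<le> M\<close> abs_ge_zero, of 2] by simp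
      qed (use e' in auto)
      finally have B: "e'^3 * v e'^2 \<le> e' * M^2" .
      have A': "4 * (a^3 * v a^2) \<le> a^2 * Q + 4 * (e'^3 * v e'^2)" using A by (simp add: right_diff_distrib)
      have B': "4 * (e'^3 * v e'^2) \<le> e' * (4 * M^2)" using B by simp
      show ?thesis using A' B' by linarith
    qed
    have "4 * (a^3 * v a^2) \<le> a^2 * Q"
      by (rule small_limit[OF a(1) _ E]) simp_all
    then have "a^2 * (4 * (a * v a^2)) \<le> a^2 * Q" by (simp add: power2_eq_square power3_eq_cube algebra_simps)
    then show ?thesis using a by (simp add: mult_le_cancel_left)
  qed
  have I1: "(\<lambda>x. (v x^2 + x^2 * v' x^2)/2) integrable_on {e..b}"
    by (intro integrable_continuous_interval sub[OF eb(1) eb(3)] continuous_intros cv cv') auto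
  have I2: "(\<lambda>x. q x^2) integrable_on {e..b}"
    by (intro integrable_continuous_interval sub[OF eb(1) eb(3)] continuous_intros cq)
  have I3: "(\<lambda>x. 4 * (v x^2 + 2 * x * v x * v' x)) integrable_on {e..b}"
    by (intro integrable_continuous_interval sub[OF eb(1) eb(3)] continuous_intros cv cv')
  have "integral {e..b} (\<lambda>x. (v x^2 + x^2 * v' x^2)/2) \<le> integral {e..b} (\<lambda>x. q x^2 - 4 * (v x^2 + 2 * x * v x * v' x))"
  proof (rule integral_le[OF I1 integrable_diff[OF I2 I3]])
    fix x assume "x \<in> {e..b}"
    then have "0 < x" "x < R" using eb by auto
    from pw0[OF this] show "(v x^2 + x^2 * v' x^2)/2 \<le> q x^2 - 4 * (v x^2 + 2 * x * v x * v' x)" by linarith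
  qed
  also have "\<dots> = integral {e..b} (\<lambda>x. q x^2) - 4 * (b * v b^2 - e * v e^2)"
    by (simp only: integral_diff[OF I2 I3] integral_mult_right ftc0[OF eb])
  also have "\<dots> \<le> Q + 4 * (e * v e^2)"
  proof -
    have "integral {e..b} (\<lambda>x. q x^2) \<le> Q" using Qb[OF eb] by (simp add: q_def)
    moreover have "0 \<le> b * v b^2" using eb by simp
    ultimately show ?thesis unfolding right_diff_distrib by linarith
  qed
  also have "\<dots> \<le> Q + Q" using step1[of e] eb by simp
  finally have "integral {e..b} (\<lambda>x. (v x^2 + x^2 * v' x^2)/2) \<le> 2 * Q" by simp
  then show ?thesis by simp
qed




lemma enn_lower:
  fixes g :: "real \<Rightarrow> real"
  assumes "0 < e" "e \<le> b" "b < R" "continuous_on {0<..<R} g" "\<And>x. 0 < x \<Longrightarrow> x < R \<Longrightarrow> 0 \<le> g x"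
  shows "ennreal (integral {e..b} g) \<le> (\<integral>\<^sup>+x\<in>{0<..<R}. ennreal (g x) \<partial>lborel)"
proof -
  have c: "continuous_on {e..b} g" using assms(1,3,4) by (elim continuous_on_subset) auto
  have I: "(g has_integral integral {e..b} g) {e..b}"
    using integrable_continuous_interval[OF c] by (rule integrable_integral)
  have eq: "(\<integral>\<^sup>+x. ennreal (g x) * indicator {e..b} x \<partial>lborel) = ennreal (integral {e..b} g)"
    by (rule nn_integral_has_integral_lebesgue'[OF _ I]) (use assms in auto)
  have le: "(\<integral>\<^sup>+x. ennreal (g x) * indicator {e..b} x \<partial>lborel) \<le> (\<integral>\<^sup>+x. ennreal (g x) * indicator {0<..<R} x \<partial>lborel)"
    using assms(1,3) by (intro nn_integral_mono) (auto simp: indicator_def)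
  show ?thesis using le unfolding eq .
qed

lemma enn_upper:
  fixes g :: "real \<Rightarrow> real"
  assumes R: "0 < R" and cg: "continuous_on {0<..<R} g" and nn: "\<And>x. 0 < x \<Longrightarrow> x < R \<Longrightarrow> 0 \<le> g x"
    and bnd: "\<And>e b. 0 < e \<Longrightarrow> e \<le> b \<Longrightarrow> b < R \<Longrightarrow> integral {e..b} g \<le> X"
  shows "(\<integral>\<^sup>+x\<in>{0<..<R}. ennreal (g x) \<partial>lborel) \<le> ennreal X"
proof -
  define E where "E n = R / (real n + 3)" for n :: nat
  define F where "F n x = ennreal (g x) * indicator {E n..R - E n} x" for n x
  have E0: "0 < E n" for n using R by (simp add: E_def)
  have E1: "E n \<le> R - E n" for n
  proof -
    have "E n \<le> R / 3" using R unfolding E_def by (intro divide_left_mono) auto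
    then show ?thesis using R by simp
  qed
  have E2: "R - E n < R" for n using E0[of n] by simp
  have Emono: "E n \<le> E m" if "m \<le> n" for m n
    using R that unfolding E_def by (intro divide_left_mono) auto
  have inc: "incseq F"
    unfolding incseq_def le_fun_def
  proof (intro allI impI)
    fix m n x assume "m \<le> (n::nat)"
    then have "indicator {E m..R - E m} x \<le> (indicator {E n..R - E n} x :: ennreal)"
      using Emono[of m n] by (auto simp: indicator_def)
    then show "F m x \<le> F n x" unfolding F_def by (intro mult_left_mono) auto
  qed
  have meas: "F n \<in> borel_measurable lborel" for n
  proof -
    have c: "continuous_on {E n..R - E n} g" using E0[of n] E2[of n] by (intro continuous_on_subset[OF cg]) auto
    have m1: "(\<lambda>x. indicator {E n..R - E n} x *\<^sub>R g x) \<in> borel_measurable borel"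
      by (rule borel_measurable_continuous_on_indicator[OF _ c]) simp
    have "F n = (\<lambda>x. ennreal (indicator {E n..R - E n} x *\<^sub>R g x))"
      by (auto simp: F_def indicator_def fun_eq_iff)
    also have "\<dots> \<in> borel_measurable lborel" using m1 by simp
    finally show ?thesis .
  qed
  have sup: "(SUP n. F n x) = ennreal (g x) * indicator {0<..<R} x" for x
  proof (cases "x \<in> {0<..<R}")
    case True
    then have x: "0 < x" "x < R" by auto
    define m where "m = min x (R - x)"
    have m: "0 < m" "m \<le> x" "m \<le> R - x" using x by (auto simp: m_def)
    obtain N :: nat where N: "R / m < real N" using reals_Archimedean2 by blast
    have "E N \<le> m"
    proof -
      have "R < m * real N" using N m(1) by (simp add: divide_less_eq mult.commute)
      also have "\<dots> \<le> m * (real N + 3)" using m(1) by simp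
      finally show ?thesis unfolding E_def using m(1) by (simp add: divide_le_eq mult.commute)
    qed
    then have inN: "x \<in> {E N..R - E N}" using m by auto
    have le: "F n x \<le> ennreal (g x)" for n
      unfolding F_def by (auto simp: indicator_def)
    have "(SUP n. F n x) = ennreal (g x)"
    proof (rule antisym)
      show "(SUP n. F n x) \<le> ennreal (g x)" by (rule SUP_least) (rule le)
      show "ennreal (g x) \<le> (SUP n. F n x)"
        by (rule SUP_upper2[of N]) (use inN in \<open>auto simp: F_def\<close>)
    qed
    then show ?thesis using True by simp
  next
    case False
    have "F n x = 0" for n
    proof -
      have "x \<notin> {E n..R - E n}" using False E0[of n] E2[of n] by auto
      then show ?thesis by (simp add: F_def)
    qed
    then show ?thesis using False by simp
  qed
  have "(\<integral>\<^sup>+x\<in>{0<..<R}. ennreal (g x) \<partial>lborel) = (\<integral>\<^sup>+x. (SUP n. F n x) \<partial>lborel)"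
    by (simp add: sup)
  also have "\<dots> = (SUP n. integral\<^sup>N lborel (F n))"
    by (rule nn_integral_monotone_convergence_SUP[OF inc meas])
  also have "\<dots> \<le> ennreal X"
  proof (rule SUP_least)
    fix n
    have c: "continuous_on {E n..R - E n} g" using E0[of n] E2[of n] by (intro continuous_on_subset[OF cg]) auto
    have I: "(g has_integral integral {E n..R - E n} g) {E n..R - E n}"
      using integrable_continuous_interval[OF c] by (rule integrable_integral)
    have "integral\<^sup>N lborel (F n) = ennreal (integral {E n..R - E n} g)"
      unfolding F_def
      by (rule nn_integral_has_integral_lebesgue'[OF _ I]) (use E0[of n] E2[of n] nn in auto)
    also have "\<dots> \<le> ennreal X"
      by (intro ennreal_leI bnd E0 E1 E2)
    finally show "integral\<^sup>N lborel (F n) \<le> ennreal X" .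
  qed
  finally show ?thesis .
qed

lemma coef_bound:
  fixes c :: real and I :: ennreal
  assumes c: "0 \<le> c" and fin: "ennreal (4 * c) * I \<noteq> top"
    and J: "\<And>e b. P e b \<Longrightarrow> ennreal (J e b) \<le> I"
  shows "\<exists>r\<ge>0. ennreal (4 * c) * I = ennreal (4 * c * r) \<and> (\<forall>e b. P e b \<longrightarrow> c * J e b \<le> c * r)"
proof (cases "c = 0")
  case True
  then show ?thesis by (intro exI[of _ 0]) simp
next
  case False
  then have "0 < c" using c by simp
  then have "I \<noteq> top" using fin by (auto simp: ennreal_mult_eq_top_iff)
  then obtain r where r: "I = ennreal r" "0 \<le> r" by (cases I rule: ennreal_cases) auto
  show ?thesis
  proof (intro exI[of _ r] conjI allI impI)
    show "0 \<le> r" by fact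
    show "ennreal (4 * c) * I = ennreal (4 * c * r)" using r c by (simp add: ennreal_mult)
    fix e b assume "P e b"
    from J[OF this] have "J e b \<le> r" using r by (simp add: ennreal_le_iff)
    then show "c * J e b \<le> c * r" using c by (rule mult_left_mono)
  qed
qed


lemma core_enn:
  fixes v v' p G1 G2 :: "real \<Rightarrow> real"
  assumes R: "0 < R"
    and der: "\<And>x. 0 < x \<Longrightarrow> x < R \<Longrightarrow> (v has_real_derivative v' x) (at x)"
    and cv': "continuous_on {0<..<R} v'" and cp: "continuous_on {0<..<R} p"
    and pb: "\<And>x. 0 < x \<Longrightarrow> x < R \<Longrightarrow> \<bar>p x - 4\<bar> \<le> 1/10"
    and vb: "\<And>x. 0 < x \<Longrightarrow> x < R \<Longrightarrow> \<bar>x * v x\<bar> \<le> M"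
    and cG1: "continuous_on {0<..<R} G1" and cG2: "continuous_on {0<..<R} G2"
    and nG1: "\<And>x. 0 < x \<Longrightarrow> x < R \<Longrightarrow> 0 \<le> G1 x"
    and nG2: "\<And>x. 0 < x \<Longrightarrow> x < R \<Longrightarrow> 0 \<le> G2 x"
    and c1: "0 \<le> c1" and c2: "0 \<le> c2"
    and qb: "\<And>x. 0 < x \<Longrightarrow> x < R \<Longrightarrow> (x * v' x + p x * v x)^2 \<le> c1 * G1 x + c2 * G2 x"
  shows "(\<integral>\<^sup>+x\<in>{0<..<R}. ennreal (v x^2 + x^2 * v' x^2) \<partial>lborel)
    \<le> ennreal (4 * c1) * (\<integral>\<^sup>+x\<in>{0<..<R}. ennreal (G1 x) \<partial>lborel)
      + ennreal (4 * c2) * (\<integral>\<^sup>+x\<in>{0<..<R}. ennreal (G2 x) \<partial>lborel)"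
    (is "?L \<le> ennreal (4 * c1) * ?I1 + ennreal (4 * c2) * ?I2")
proof (cases "ennreal (4 * c1) * ?I1 + ennreal (4 * c2) * ?I2 = top")
  case True
  show ?thesis unfolding True by (rule top_greatest)
next
  case False
  then have f1: "ennreal (4 * c1) * ?I1 \<noteq> top" and f2: "ennreal (4 * c2) * ?I2 \<noteq> top"
    by (auto simp: ennreal_add_eq_top)
  have cv: "continuous_on {0<..<R} v"
    by (rule continuous_at_imp_continuous_on) (metis DERIV_isCont der greaterThanLessThan_iff)
  let ?P = "\<lambda>e b. 0 < e \<and> e \<le> b \<and> b < R"
  obtain r1 where r1: "0 \<le> r1" "ennreal (4 * c1) * ?I1 = ennreal (4 * c1 * r1)"
      "\<And>e b. ?P e b \<Longrightarrow> c1 * integral {e..b} G1 \<le> c1 * r1"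
    using coef_bound[OF c1 f1, of ?P "\<lambda>e b. integral {e..b} G1"] enn_lower[OF _ _ _ cG1 nG1] by blast
  obtain r2 where r2: "0 \<le> r2" "ennreal (4 * c2) * ?I2 = ennreal (4 * c2 * r2)"
      "\<And>e b. ?P e b \<Longrightarrow> c2 * integral {e..b} G2 \<le> c2 * r2"
    using coef_bound[OF c2 f2, of ?P "\<lambda>e b. integral {e..b} G2"] enn_lower[OF _ _ _ cG2 nG2] by blast
  have sub: "continuous_on {e..b} f" if "0 < e" "b < R" "continuous_on {0<..<R} f" for e b and f :: "real \<Rightarrow> real"
    using that by (elim continuous_on_subset) auto
  have Qb: "integral {e..b} (\<lambda>x. (x * v' x + p x * v x)^2) \<le> c1 * r1 + c2 * r2"
    if eb: "0 < e" "e \<le> b" "b < R" for e b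
  proof -
    have i1: "G1 integrable_on {e..b}" by (intro integrable_continuous_interval sub[OF eb(1) eb(3)] cG1)
    have i2: "G2 integrable_on {e..b}" by (intro integrable_continuous_interval sub[OF eb(1) eb(3)] cG2)
    have i0: "(\<lambda>x. (x * v' x + p x * v x)^2) integrable_on {e..b}"
      by (intro integrable_continuous_interval sub[OF eb(1) eb(3)] continuous_intros cv cv' cp)
    have "integral {e..b} (\<lambda>x. (x * v' x + p x * v x)^2) \<le> integral {e..b} (\<lambda>x. c1 * G1 x + c2 * G2 x)"
    proof (rule integral_le[OF i0])
      show "(\<lambda>x. c1 * G1 x + c2 * G2 x) integrable_on {e..b}"
        by (intro integrable_add integrable_on_mult_right i1 i2)
      fix x assume "x \<in> {e..b}"
      then show "(x * v' x + p x * v x)^2 \<le> c1 * G1 x + c2 * G2 x" using eb by (intro qb) auto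
    qed
    also have "\<dots> = c1 * integral {e..b} G1 + c2 * integral {e..b} G2"
      by (subst integral_add) (auto intro: integrable_on_mult_right i1 i2)
    also have "\<dots> \<le> c1 * r1 + c2 * r2"
      using r1(3)[of e b] r2(3)[of e b] eb by simp
    finally show ?thesis .
  qed
  have "?L \<le> ennreal (4 * (c1 * r1 + c2 * r2))"
  proof (rule enn_upper[OF R])
    show "continuous_on {0<..<R} (\<lambda>x. v x^2 + x^2 * v' x^2)"
      by (intro continuous_intros cv cv')
    show "0 \<le> v x^2 + x^2 * v' x^2" for x by simp
    fix e b assume "0 < e" "e \<le> b" "b < R"
    then show "integral {e..b} (\<lambda>x. v x^2 + x^2 * v' x^2) \<le> 4 * (c1 * r1 + c2 * r2)"
      by (intro core_real[of R v v' p M "c1 * r1 + c2 * r2" e b] der cv' cp pb vb Qb) auto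
  qed
  also have "\<dots> = ennreal (4 * c1 * r1) + ennreal (4 * c2 * r2)"
    using r1(1) r2(1) c1 c2 by (simp add: distrib_left ennreal_plus mult.assoc)
  finally show ?thesis using r1(2) r2(2) by simp
qed




lemma alg_basic:
  fixes h0 h1 x \<epsilon> P S :: real
  assumes "\<bar>h0\<bar> < \<epsilon>" "\<bar>x * h1\<bar> < \<epsilon>" "\<epsilon> \<le> 1/100"
    and P: "P = 1 + h0" and S: "S = 1 + h0 + x * h1"
  shows "99/100 \<le> P" "P \<le> 101/100" "98/100 \<le> S" "S \<le> 102/100"
  using assms by (auto simp: abs_less_iff)

lemma alg_p:
  fixes h0 h1 x \<epsilon> P S :: real
  assumes "\<bar>h0\<bar> < \<epsilon>" "\<bar>x * h1\<bar> < \<epsilon>" "\<epsilon> \<le> 1/100"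
    and P: "P = 1 + h0" and S: "S = 1 + h0 + x * h1"
  shows "\<bar>(2 * S / P + 2) - 4\<bar> \<le> 1/10"
proof -
  note b = alg_basic[OF assms]
  have "(2 * S / P + 2) - 4 = 2 * (x * h1) / P" using b(1) by (simp add: P S field_simps)
  also have "\<bar>\<dots>\<bar> = 2 * \<bar>x * h1\<bar> / P" using b(1) by (simp add: abs_mult)
  also have "\<dots> \<le> 2 * (1/100) / (99/100)"
    using assms(2,3) b(1) by (intro frac_le) auto
  also have "\<dots> \<le> 1/10" by simp
  finally show ?thesis .
qed

lemma alg1:
  fixes h0 h1 h2 x \<epsilon> P S :: real
  assumes "\<bar>h0\<bar> < \<epsilon>" "\<bar>x * h1\<bar> < \<epsilon>" "\<epsilon> \<le> 1/100"
    and P: "P = 1 + h0" and S: "S = 1 + h0 + x * h1"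
  shows "(x * h2 + (2 * S / P + 2) * h1)^2 \<le> 2 * (2 * h1 / P + (2 * h1 + x * h2) / S)^2"
proof -
  note b = alg_basic[OF assms]
  have "x * h2 + (2 * S / P + 2) * h1 = S * (2 * h1 / P + (2 * h1 + x * h2) / S)"
    using b(1,3) by (simp add: field_simps)
  then have "(x * h2 + (2 * S / P + 2) * h1)^2 = S^2 * (2 * h1 / P + (2 * h1 + x * h2) / S)^2"
    by (simp add: power_mult_distrib)
  also have "\<dots> \<le> 2 * (2 * h1 / P + (2 * h1 + x * h2) / S)^2"
  proof (rule mult_right_mono)
    have "S^2 \<le> (102/100)^2" using b(3,4) by (intro power_mono) auto
    then show "S^2 \<le> 2" by (simp add: power2_eq_square)
  qed simp
  finally show ?thesis .
qed

lemma alg2: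
  fixes h0 h1 h2 g0 g1 g2 x \<epsilon> P S H :: real
  assumes "\<bar>h0\<bar> < \<epsilon>" "\<bar>x * h1\<bar> < \<epsilon>" "\<epsilon> \<le> 1/100"
    and P: "P = 1 + h0" and S: "S = 1 + h0 + x * h1"
    and g0: "\<bar>g0\<bar> < \<epsilon>" and g1: "\<bar>x * g1\<bar> < \<epsilon>" and e0: "0 < \<epsilon>"
    and H: "H = 2 * g1 / P - 2 * h1 * g0 / P^2 + (2 * g1 + x * g2) / S - (2 * h1 + x * h2) * (g0 + x * g1) / S^2"
  shows "(x * g2 + (2 * S / P + 2) * g1)^2 \<le> 3 * H^2 + (2 * \<epsilon>) * (h1^2 + x^2 * h2^2)"
proof -
  note b = alg_basic[OF assms(1-5)]
  define A where "A = 2 * h1 * g0 * S / P^2"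
  define B where "B = (2 * h1 + x * h2) * (g0 + x * g1) / S"
  have id: "x * g2 + (2 * S / P + 2) * g1 = S * H + (A + B)"
    using b(1,3) unfolding H A_def B_def by (simp add: field_simps power2_eq_square)
  have SP: "S / P^2 \<le> 21/20"
  proof -
    have "(99/100)^2 \<le> P^2" using b(1) by (intro power_mono) auto
    then have "S \<le> 21/20 * P^2" using b(4) by (simp add: power2_eq_square)
    moreover have "0 < P^2" using b(1) by simp
    ultimately show ?thesis by (simp add: pos_divide_le_eq)
  qed
  have SP0: "0 \<le> S / P^2" using b(1,3) by simp
  have Ab: "\<bar>A\<bar> \<le> 21/10 * (\<epsilon> * \<bar>h1\<bar>)"
  proof -
    have "\<bar>A\<bar> = 2 * \<bar>h1\<bar> * (\<bar>g0\<bar> * (S / P^2))"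
      using SP0 b(3) unfolding A_def by (simp add: abs_mult abs_divide)
    also have "\<bar>g0\<bar> * (S / P^2) \<le> \<epsilon> * (21/20)"
      using g0 SP SP0 e0 by (intro mult_mono) auto
    then have "2 * \<bar>h1\<bar> * (\<bar>g0\<bar> * (S / P^2)) \<le> 2 * \<bar>h1\<bar> * (\<epsilon> * (21/20))"
      by (intro mult_left_mono) auto
    finally show ?thesis by (simp add: algebra_simps)
  qed
  have Sinv: "1 / S \<le> 103/100" using b(3) by (simp add: divide_le_eq)
  have Bb: "\<bar>B\<bar> \<le> 103/50 * (\<epsilon> * (2 * \<bar>h1\<bar> + \<bar>x * h2\<bar>))"
  proof -
    have "\<bar>B\<bar> = \<bar>2 * h1 + x * h2\<bar> * (\<bar>g0 + x * g1\<bar> * (1 / S))"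
      using b(3) unfolding B_def by (simp add: abs_mult abs_divide)
    also have "\<dots> \<le> (2 * \<bar>h1\<bar> + \<bar>x * h2\<bar>) * ((2 * \<epsilon>) * (103/100))"
    proof (rule mult_mono)
      show "\<bar>2 * h1 + x * h2\<bar> \<le> 2 * \<bar>h1\<bar> + \<bar>x * h2\<bar>"
        by (metis abs_mult abs_numeral abs_triangle_ineq)
      have "\<bar>g0 + x * g1\<bar> \<le> 2 * \<epsilon>" using g0 g1 abs_triangle_ineq[of g0 "x * g1"] by linarith
      then show "\<bar>g0 + x * g1\<bar> * (1 / S) \<le> (2 * \<epsilon>) * (103/100)"
        using Sinv b(3) e0 by (intro mult_mono) auto
    qed (use b(3) in auto)
    finally show ?thesis by (simp add: algebra_simps)
  qed
  define K where "K = \<bar>h1\<bar> + \<bar>x * h2\<bar>"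
  have K0: "0 \<le> K" by (simp add: K_def)
  have ABb: "\<bar>A + B\<bar> \<le> 7 * (\<epsilon> * K)"
  proof -
    have "\<bar>A + B\<bar> \<le> \<bar>A\<bar> + \<bar>B\<bar>" by (rule abs_triangle_ineq)
    moreover have "\<epsilon> * \<bar>x * h2\<bar> \<ge> 0" using e0 by simp
    moreover have "\<epsilon> * \<bar>h1\<bar> \<ge> 0" using e0 by simp
    moreover have "\<epsilon> * K = \<epsilon> * \<bar>h1\<bar> + \<epsilon> * \<bar>x * h2\<bar>" by (simp add: K_def algebra_simps)
    moreover have "\<epsilon> * (2 * \<bar>h1\<bar> + \<bar>x * h2\<bar>) = 2 * (\<epsilon> * \<bar>h1\<bar>) + \<epsilon> * \<bar>x * h2\<bar>" by (simp add: algebra_simps)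
    ultimately show ?thesis using Ab Bb by linarith
  qed
  have AB2: "(A + B)^2 \<le> \<epsilon> * (h1^2 + x^2 * h2^2)"
  proof -
    have "(A + B)^2 = \<bar>A + B\<bar>^2" by simp
    also have "\<dots> \<le> (7 * (\<epsilon> * K))^2" using ABb by (intro power_mono) auto
    also have "\<dots> = 49 * \<epsilon>^2 * K^2" by (simp add: power_mult_distrib)
    also have "K^2 \<le> 2 * (h1^2 + x^2 * h2^2)"
    proof -
      have "0 \<le> (\<bar>h1\<bar> - \<bar>x * h2\<bar>)^2" by simp
      then show ?thesis unfolding K_def by (simp add: power2_eq_square algebra_simps abs_mult_self_eq)
    qed
    then have "49 * \<epsilon>^2 * K^2 \<le> 49 * \<epsilon>^2 * (2 * (h1^2 + x^2 * h2^2))"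
      by (intro mult_left_mono) auto
    also have "\<dots> = (98 * \<epsilon>) * \<epsilon> * (h1^2 + x^2 * h2^2)" by (simp add: power2_eq_square)
    also have "\<dots> \<le> 1 * \<epsilon> * (h1^2 + x^2 * h2^2)"
      using assms(3) e0 by (intro mult_right_mono) auto
    finally show ?thesis by simp
  qed
  have "(x * g2 + (2 * S / P + 2) * g1)^2 = (S * H + (A + B))^2" by (simp add: id)
  also have "\<dots> \<le> 2 * (S * H)^2 + 2 * (A + B)^2"
  proof -
    have "0 \<le> (S * H - (A + B))^2" by simp
    then show ?thesis by (simp add: power2_eq_square algebra_simps)
  qed
  also have "2 * (S * H)^2 \<le> 3 * H^2"
  proof -
    have "S^2 \<le> (102/100)^2" using b(3,4) by (intro power_mono) auto
    then have "2 * S^2 \<le> 3" by (simp add: power2_eq_square)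
    then have "2 * S^2 * H^2 \<le> 3 * H^2" by (intro mult_right_mono) auto
    then show ?thesis by (simp add: power_mult_distrib)
  qed
  then have "2 * (S * H)^2 + 2 * (A + B)^2 \<le> 3 * H^2 + (2 * \<epsilon>) * (h1^2 + x^2 * h2^2)"
    using AB2 by linarith
  finally show ?thesis .
qed




lemma alg_inv:
  fixes P S b y :: real
  assumes "P \<noteq> 0" "S \<noteq> 0"
  shows "inverse (P^2 * S) * (2 * P * b * S + P^2 * (b + (b + y))) = 2 * b / P + (2 * b + y) / S"
  using assms by (simp add: field_simps power2_eq_square)

lemma alg_inv2:
  fixes P S h1 h2 g0 g1 g2 x :: real
  assumes "P \<noteq> 0" "S \<noteq> 0"
  shows "(2 * g1 * P - 2 * h1 * g0) / (P * P) + ((2 * g1 + x * g2) * S - (2 * h1 + x * h2) * (g0 + x * g1)) / (S * S)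
    = 2 * g1 / P - 2 * h1 * g0 / P^2 + (2 * g1 + x * g2) / S - (2 * h1 + x * h2) * (g0 + x * g1) / S^2"
  using assms by (simp add: field_simps power2_eq_square)

lemma Hx_formula:
  assumes sm: "smooth_on_rect R T h" and x: "x \<in> {0<..<R}" and t: "t \<in> {0<..<T}"
    and P: "0 < 1 + h x t" and S: "0 < 1 + h x t + x * dx h x t"
  shows "dx (rel_entropy h) x t = 2 * dx h x t / (1 + h x t) + (2 * dx h x t + x * dx (dx h) x t) / (1 + h x t + x * dx h x t)"
proof -
  have d0: "((\<lambda>y. h y t) has_real_derivative dx h x t) (at x)" using smooth_dx[OF sm x t, of "[]"] by simp
  have d1: "((\<lambda>y. dx h y t) has_real_derivative dx (dx h) x t) (at x)" using smooth_dx[OF sm x t, of "[True]"] by simp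
  have D: "((\<lambda>y. (1 + h y t)^2 * (1 + h y t + y * dx h y t)) has_real_derivative
      (2 * (1 + h x t) * dx h x t * (1 + h x t + x * dx h x t) + (1 + h x t)^2 * (dx h x t + (dx h x t + x * dx (dx h) x t)))) (at x)"
    by (auto intro!: derivative_eq_intros d0 d1 simp: algebra_simps power2_eq_square)
  have pos: "0 < (1 + h x t)^2 * (1 + h x t + x * dx h x t)" using P S by simp
  have L: "((\<lambda>y. ln ((1 + h y t)^2 * (1 + h y t + y * dx h y t))) has_real_derivative
      inverse ((1 + h x t)^2 * (1 + h x t + x * dx h x t)) *
      (2 * (1 + h x t) * dx h x t * (1 + h x t + x * dx h x t) + (1 + h x t)^2 * (dx h x t + (dx h x t + x * dx (dx h) x t)))) (at x)"
    by (rule DERIV_chain2[OF DERIV_ln[OF pos] D])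
  have "dx (rel_entropy h) x t = inverse ((1 + h x t)^2 * (1 + h x t + x * dx h x t)) *
      (2 * (1 + h x t) * dx h x t * (1 + h x t + x * dx h x t) + (1 + h x t)^2 * (dx h x t + (dx h x t + x * dx (dx h) x t)))"
    unfolding dx_def[of "rel_entropy h"] rel_entropy_def using L by (simp add: DERIV_imp_deriv dx_def)
  also have "\<dots> = 2 * dx h x t / (1 + h x t) + (2 * dx h x t + x * dx (dx h) x t) / (1 + h x t + x * dx h x t)"
    using P S by (intro alg_inv) auto
  finally show ?thesis .
qed


lemma Hxt_formula:
  assumes sm: "smooth_on_rect R T h" and x: "x \<in> {0<..<R}" and t: "t \<in> {0<..<T}"
    and P: "\<And>s. s \<in> {0<..<T} \<Longrightarrow> 0 < 1 + h x s" and S: "\<And>s. s \<in> {0<..<T} \<Longrightarrow> 0 < 1 + h x s + x * dx h x s"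
  shows "dt (dx (rel_entropy h)) x t =
     2 * dt (dx h) x t / (1 + h x t) - 2 * dx h x t * dt h x t / (1 + h x t)^2
     + (2 * dt (dx h) x t + x * dt (dx (dx h)) x t) / (1 + h x t + x * dx h x t)
     - (2 * dx h x t + x * dx (dx h) x t) * (dt h x t + x * dt (dx h) x t) / (1 + h x t + x * dx h x t)^2"
proof -
  have e0: "((\<lambda>s. h x s) has_real_derivative dt h x t) (at t)" using smooth_dt[OF sm x t, of "[]"] by simp
  have e1: "((\<lambda>s. dx h x s) has_real_derivative dt (dx h) x t) (at t)" using smooth_dt[OF sm x t, of "[True]"] by simp
  have e2: "((\<lambda>s. dx (dx h) x s) has_real_derivative dt (dx (dx h)) x t) (at t)" using smooth_dt[OF sm x t, of "[True, True]"] by simp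
  have Pt: "0 < 1 + h x t" and St: "0 < 1 + h x t + x * dx h x t" using P S t by auto
  have A1: "((\<lambda>s. 2 * dx h x s) has_real_derivative 2 * dt (dx h) x t) (at t)" by (rule DERIV_cmult[OF e1])
  have B1: "((\<lambda>s. 1 + h x s) has_real_derivative dt h x t) (at t)" using DERIV_add[OF DERIV_const[of 1] e0] by simp
  have A2: "((\<lambda>s. 2 * dx h x s + x * dx (dx h) x s) has_real_derivative 2 * dt (dx h) x t + x * dt (dx (dx h)) x t) (at t)"
    by (rule DERIV_add[OF A1 DERIV_cmult[OF e2]])
  have B2: "((\<lambda>s. 1 + h x s + x * dx h x s) has_real_derivative dt h x t + x * dt (dx h) x t) (at t)"
    by (rule DERIV_add[OF B1 DERIV_cmult[OF e1]])
  have nz1: "1 + h x t \<noteq> 0" and nz2: "1 + h x t + x * dx h x t \<noteq> 0" using Pt St by auto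
  note D0 = DERIV_add[OF DERIV_divide[OF A1 B1 nz1] DERIV_divide[OF A2 B2 nz2]]
  have D: "((\<lambda>s. 2 * dx h x s / (1 + h x s) + (2 * dx h x s + x * dx (dx h) x s) / (1 + h x s + x * dx h x s)) has_real_derivative
     2 * dt (dx h) x t / (1 + h x t) - 2 * dx h x t * dt h x t / (1 + h x t)^2
     + (2 * dt (dx h) x t + x * dt (dx (dx h)) x t) / (1 + h x t + x * dx h x t)
     - (2 * dx h x t + x * dx (dx h) x t) * (dt h x t + x * dt (dx h) x t) / (1 + h x t + x * dx h x t)^2) (at t)"
    using D0 unfolding alg_inv2[OF nz1 nz2] .
  have D2: "((\<lambda>s. dx (rel_entropy h) x s) has_real_derivative
     2 * dt (dx h) x t / (1 + h x t) - 2 * dx h x t * dt h x t / (1 + h x t)^2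
     + (2 * dt (dx h) x t + x * dt (dx (dx h)) x t) / (1 + h x t + x * dx h x t)
     - (2 * dx h x t + x * dx (dx h) x t) * (dt h x t + x * dt (dx h) x t) / (1 + h x t + x * dx h x t)^2) (at t)"
  proof (rule has_field_derivative_transform_within_open[OF D _ t])
    show "open {0<..<T}" by simp
    fix s assume s: "s \<in> {0<..<T}"
    show "2 * dx h x s / (1 + h x s) + (2 * dx h x s + x * dx (dx h) x s) / (1 + h x s + x * dx h x s) = dx (rel_entropy h) x s"
      by (rule Hx_formula[OF sm x s P[OF s] S[OF s], symmetric])
  qed
  then show ?thesis unfolding dt_def[of "dx (rel_entropy h)"] by (rule DERIV_imp_deriv)
qed




lemma sup_pt:
  assumes "sup_abs R T f < ereal e" "x \<in> {0<..<R}" "t \<in> {0<..<T}"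
  shows "\<bar>f x t\<bar> < e"
proof -
  have "ereal \<bar>f x t\<bar> \<le> sup_abs R T f"
    unfolding sup_abs_def by (rule SUP_upper2[of "(x, t)"]) (use assms in auto)
  then have "ereal \<bar>f x t\<bar> < ereal e" using assms(1) by (rule le_less_trans)
  then show ?thesis by simp
qed

lemma smooth_cont_rect:
  assumes "smooth_on_rect R T h"
  shows "continuous_on ({0<..<R} \<times> {0<..<T}) (\<lambda>(x, t). iter_partial ws h x t)"
  using assms unfolding smooth_on_rect_def by blast

lemma main_fixed:
  fixes h :: "real \<Rightarrow> real \<Rightarrow> real"
  assumes R0: "0 < R0" and T: "0 < T" and sm: "smooth_on_rect R0 T h" and e0: "0 < \<epsilon>" and e1: "\<epsilon> < 1/100"
    and bh: "\<And>x s. x \<in> {0<..<R0} \<Longrightarrow> s \<in> {0<..<T} \<Longrightarrow> \<bar>h x s\<bar> < \<epsilon>"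
    and bhx: "\<And>x s. x \<in> {0<..<R0} \<Longrightarrow> s \<in> {0<..<T} \<Longrightarrow> \<bar>x * dx h x s\<bar> < \<epsilon>"
    and bht: "\<And>x s. x \<in> {0<..<R0} \<Longrightarrow> s \<in> {0<..<T} \<Longrightarrow> \<bar>dt h x s\<bar> < \<epsilon>"
    and bhxt: "\<And>x s. x \<in> {0<..<R0} \<Longrightarrow> s \<in> {0<..<T} \<Longrightarrow> \<bar>x * dt (dx h) x s\<bar> < \<epsilon>"
    and t: "t \<in> {0<..<T}"
  shows "(\<integral>\<^sup>+x\<in>{0<..<R0}. ennreal ((dx h x t)^2 + x^2 * (dx (dx h) x t)^2) \<partial>lborel)
             \<le> ennreal 12 * (\<integral>\<^sup>+x\<in>{0<..<R0}. ennreal ((dx (rel_entropy h) x t)^2) \<partial>lborel) \<and>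
           (\<integral>\<^sup>+x\<in>{0<..<R0}. ennreal ((dt (dx h) x t)^2 + x^2 * (dt (dx (dx h)) x t)^2) \<partial>lborel)
             \<le> ennreal 12 * (\<integral>\<^sup>+x\<in>{0<..<R0}. ennreal ((dt (dx (rel_entropy h)) x t)^2) \<partial>lborel)
               + ennreal (12 * \<epsilon>) * (\<integral>\<^sup>+x\<in>{0<..<R0}. ennreal ((dx h x t)^2 + x^2 * (dx (dx h) x t)^2) \<partial>lborel)"
proof -
  have e1': "\<epsilon> \<le> 1/100" using e1 by simp
  have Ppos: "0 < 1 + h x s" if "x \<in> {0<..<R0}" "s \<in> {0<..<T}" for x s
    using bh[OF that] e1 by (auto simp: abs_less_iff)
  have Spos: "0 < 1 + h x s + x * dx h x s" if "x \<in> {0<..<R0}" "s \<in> {0<..<T}" for x s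
    using bh[OF that] bhx[OF that] e1 by (auto simp: abs_less_iff)
  have Hxf: "dx (rel_entropy h) x t = 2 * dx h x t / (1 + h x t) + (2 * dx h x t + x * dx (dx h) x t) / (1 + h x t + x * dx h x t)"
    if x: "x \<in> {0<..<R0}" for x
    by (rule Hx_formula[OF sm x t Ppos[OF x t] Spos[OF x t]])
  have Hxtf: "dt (dx (rel_entropy h)) x t =
     2 * dt (dx h) x t / (1 + h x t) - 2 * dx h x t * dt h x t / (1 + h x t)^2
     + (2 * dt (dx h) x t + x * dt (dx (dx h)) x t) / (1 + h x t + x * dx h x t)
     - (2 * dx h x t + x * dx (dx h) x t) * (dt h x t + x * dt (dx h) x t) / (1 + h x t + x * dx h x t)^2"
    if x: "x \<in> {0<..<R0}" for x
    by (rule Hxt_formula[OF sm x t]) (use Ppos[OF x] Spos[OF x] in auto)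
  have c0: "continuous_on {0<..<R0} (\<lambda>x. h x t)" using smooth_cont[OF sm t, of "[]"] by simp
  have c1: "continuous_on {0<..<R0} (\<lambda>x. dx h x t)" using smooth_cont[OF sm t, of "[True]"] by simp
  have c2: "continuous_on {0<..<R0} (\<lambda>x. dx (dx h) x t)" using smooth_cont[OF sm t, of "[True, True]"] by simp
  have c3: "continuous_on {0<..<R0} (\<lambda>x. dt h x t)" using smooth_cont[OF sm t, of "[False]"] by simp
  have c4: "continuous_on {0<..<R0} (\<lambda>x. dt (dx h) x t)" using smooth_cont[OF sm t, of "[False, True]"] by simp
  have c5: "continuous_on {0<..<R0} (\<lambda>x. dt (dx (dx h)) x t)" using smooth_cont[OF sm t, of "[False, True, True]"] by simp
  define p where "p x = 2 * (1 + h x t + x * dx h x t) / (1 + h x t) + 2" for x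
  have cp: "continuous_on {0<..<R0} p" unfolding p_def
    by (intro continuous_intros c0 c1) (use Ppos t in force)
  have pb: "\<bar>p x - 4\<bar> \<le> 1/10" if "0 < x" "x < R0" for x
    unfolding p_def by (rule alg_p[OF bh bhx e1' refl refl]) (use that t in auto)
  have xin: "x \<in> {0<..<R0}" if "0 < x" "x < R0" for x using that by auto
  have cG1: "continuous_on {0<..<R0} (\<lambda>x. (dx (rel_entropy h) x t)^2)"
  proof (rule continuous_on_eq)
    show "continuous_on {0<..<R0} (\<lambda>x. (2 * dx h x t / (1 + h x t) + (2 * dx h x t + x * dx (dx h) x t) / (1 + h x t + x * dx h x t))^2)"
      by (intro continuous_intros c0 c1 c2) (use Ppos Spos t in force)+
  qed (simp add: Hxf)
  have part1: "(\<integral>\<^sup>+x\<in>{0<..<R0}. ennreal ((dx h x t)^2 + x^2 * (dx (dx h) x t)^2) \<partial>lborel)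
      \<le> ennreal (4 * 2) * (\<integral>\<^sup>+x\<in>{0<..<R0}. ennreal ((dx (rel_entropy h) x t)^2) \<partial>lborel)
        + ennreal (4 * 0) * (\<integral>\<^sup>+x\<in>{0<..<R0}. ennreal ((\<lambda>x. 0) x) \<partial>lborel)"
  proof (rule core_enn[OF R0, where v="\<lambda>x. dx h x t" and v'="\<lambda>x. dx (dx h) x t" and p=p and M=\<epsilon>])
    show "((\<lambda>x. dx h x t) has_real_derivative dx (dx h) x t) (at x)" if "0 < x" "x < R0" for x
      using smooth_dx[OF sm xin[OF that] t, of "[True]"] by simp
    show "\<bar>x * dx h x t\<bar> \<le> \<epsilon>" if "0 < x" "x < R0" for x using bhx[OF xin[OF that] t] by simp
    show "(x * dx (dx h) x t + p x * dx h x t)^2 \<le> 2 * (dx (rel_entropy h) x t)^2 + 0 * 0" if "0 < x" "x < R0" for x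
      using alg1[OF bh[OF xin[OF that] t] bhx[OF xin[OF that] t] e1' refl refl, of "dx (dx h) x t"]
      by (simp add: Hxf[OF xin[OF that]] p_def)
  qed (use c2 cp pb cG1 in auto)
  have derxt: "((\<lambda>y. dt (dx h) y t) has_real_derivative dt (dx (dx h)) x t) (at x)" if "0 < x" "x < R0" for x
  proof (rule schwarz[where k="dx h" and kx="dx (dx h)" and kt="dt (dx h)" and m="dt (dx (dx h))" and R=R0 and T=T and xz=x and tz=t])
    show "((\<lambda>y. dx h y s) has_real_derivative dx (dx h) y s) (at y)" if "y \<in> {0<..<R0}" "s \<in> {0<..<T}" for y s
      using smooth_dx[OF sm that, of "[True]"] by simp
    show "((\<lambda>s. dx h y s) has_real_derivative dt (dx h) y s) (at s)" if "y \<in> {0<..<R0}" "s \<in> {0<..<T}" for y s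
      using smooth_dt[OF sm that, of "[True]"] by simp
    show "((\<lambda>s. dx (dx h) y s) has_real_derivative dt (dx (dx h)) y s) (at s)" if "y \<in> {0<..<R0}" "s \<in> {0<..<T}" for y s
      using smooth_dt[OF sm that, of "[True, True]"] by simp
    show "continuous_on ({0<..<R0} \<times> {0<..<T}) (\<lambda>(x, t). dx (dx h) x t)"
      using smooth_cont_rect[OF sm, of "[True, True]"] by simp
    show "continuous_on ({0<..<R0} \<times> {0<..<T}) (\<lambda>(x, t). dt (dx (dx h)) x t)"
      using smooth_cont_rect[OF sm, of "[False, True, True]"] by simp
  qed (use that t in auto)
  have cG1': "continuous_on {0<..<R0} (\<lambda>x. (dt (dx (rel_entropy h)) x t)^2)"
  proof (rule continuous_on_eq)
    show "continuous_on {0<..<R0} (\<lambda>x. (2 * dt (dx h) x t / (1 + h x t) - 2 * dx h x t * dt h x t / (1 + h x t)^2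
     + (2 * dt (dx h) x t + x * dt (dx (dx h)) x t) / (1 + h x t + x * dx h x t)
     - (2 * dx h x t + x * dx (dx h) x t) * (dt h x t + x * dt (dx h) x t) / (1 + h x t + x * dx h x t)^2)^2)"
      by (intro continuous_intros c0 c1 c2 c3 c4 c5) (use Ppos Spos t in force)+
  qed (simp add: Hxtf)
  have cG2: "continuous_on {0<..<R0} (\<lambda>x. (dx h x t)^2 + x^2 * (dx (dx h) x t)^2)"
    by (intro continuous_intros c1 c2)
  have part2: "(\<integral>\<^sup>+x\<in>{0<..<R0}. ennreal ((dt (dx h) x t)^2 + x^2 * (dt (dx (dx h)) x t)^2) \<partial>lborel)
      \<le> ennreal (4 * 3) * (\<integral>\<^sup>+x\<in>{0<..<R0}. ennreal ((dt (dx (rel_entropy h)) x t)^2) \<partial>lborel)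
        + ennreal (4 * (2 * \<epsilon>)) * (\<integral>\<^sup>+x\<in>{0<..<R0}. ennreal ((dx h x t)^2 + x^2 * (dx (dx h) x t)^2) \<partial>lborel)"
  proof (rule core_enn[OF R0, where v="\<lambda>x. dt (dx h) x t" and v'="\<lambda>x. dt (dx (dx h)) x t" and p=p and M=\<epsilon>])
    show "((\<lambda>x. dt (dx h) x t) has_real_derivative dt (dx (dx h)) x t) (at x)" if "0 < x" "x < R0" for x
      by (rule derxt[OF that])
    show "\<bar>x * dt (dx h) x t\<bar> \<le> \<epsilon>" if "0 < x" "x < R0" for x using bhxt[OF xin[OF that] t] by simp
    show "(x * dt (dx (dx h)) x t + p x * dt (dx h) x t)^2
        \<le> 3 * (dt (dx (rel_entropy h)) x t)^2 + (2 * \<epsilon>) * ((dx h x t)^2 + x^2 * (dx (dx h) x t)^2)" if "0 < x" "x < R0" for x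
      using alg2[OF bh[OF xin[OF that] t] bhx[OF xin[OF that] t] e1' refl refl bht[OF xin[OF that] t] bhxt[OF xin[OF that] t] e0 Hxtf[OF xin[OF that]]]
      by (simp add: p_def)
  qed (use c5 cp pb cG1' cG2 e0 in auto)
  show ?thesis
  proof
    have "ennreal (4 * 2) * (\<integral>\<^sup>+x\<in>{0<..<R0}. ennreal ((dx (rel_entropy h) x t)^2) \<partial>lborel)
        \<le> ennreal 12 * (\<integral>\<^sup>+x\<in>{0<..<R0}. ennreal ((dx (rel_entropy h) x t)^2) \<partial>lborel)"
      by (intro mult_right_mono ennreal_leI) auto
    then show "(\<integral>\<^sup>+x\<in>{0<..<R0}. ennreal ((dx h x t)^2 + x^2 * (dx (dx h) x t)^2) \<partial>lborel)
             \<le> ennreal 12 * (\<integral>\<^sup>+x\<in>{0<..<R0}. ennreal ((dx (rel_entropy h) x t)^2) \<partial>lborel)"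
      using part1 by simp
  next
    have "ennreal (4 * 3) * (\<integral>\<^sup>+x\<in>{0<..<R0}. ennreal ((dt (dx (rel_entropy h)) x t)^2) \<partial>lborel)
        + ennreal (4 * (2 * \<epsilon>)) * (\<integral>\<^sup>+x\<in>{0<..<R0}. ennreal ((dx h x t)^2 + x^2 * (dx (dx h) x t)^2) \<partial>lborel)
      \<le> ennreal 12 * (\<integral>\<^sup>+x\<in>{0<..<R0}. ennreal ((dt (dx (rel_entropy h)) x t)^2) \<partial>lborel)
        + ennreal (12 * \<epsilon>) * (\<integral>\<^sup>+x\<in>{0<..<R0}. ennreal ((dx h x t)^2 + x^2 * (dx (dx h) x t)^2) \<partial>lborel)"
      using e0 by (intro add_mono mult_right_mono ennreal_leI) auto
    with part2 show "(\<integral>\<^sup>+x\<in>{0<..<R0}. ennreal ((dt (dx h) x t)^2 + x^2 * (dt (dx (dx h)) x t)^2) \<partial>lborel)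
             \<le> ennreal 12 * (\<integral>\<^sup>+x\<in>{0<..<R0}. ennreal ((dt (dx (rel_entropy h)) x t)^2) \<partial>lborel)
               + ennreal (12 * \<epsilon>) * (\<integral>\<^sup>+x\<in>{0<..<R0}. ennreal ((dx h x t)^2 + x^2 * (dx (dx h) x t)^2) \<partial>lborel)"
      by (rule order_trans)
  qed
qed

theorem lemma2p2:
  "\<exists>\<epsilon>s::real. 0 < \<epsilon>s \<and> \<epsilon>s < 1 \<and> (\<exists>C::real. C > 0 \<and>
     (\<forall>R0 T h \<epsilon>. 0 < R0 \<longrightarrow> 0 < T \<longrightarrow> smooth_on_rect R0 T h \<longrightarrow>
        0 < \<epsilon> \<longrightarrow> \<epsilon> < \<epsilon>s \<longrightarrow>
        max (max (sup_abs R0 T h) (sup_abs R0 T (\<lambda>x t. x * dx h x t)))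
            (max (sup_abs R0 T (dt h)) (sup_abs R0 T (\<lambda>x t. x * dt (dx h) x t))) < ereal \<epsilon> \<longrightarrow>
        (\<forall>t\<in>{0<..<T}.
           (\<integral>\<^sup>+x\<in>{0<..<R0}. ennreal ((dx h x t)^2 + x^2 * (dx (dx h) x t)^2) \<partial>lborel)
             \<le> ennreal C * (\<integral>\<^sup>+x\<in>{0<..<R0}. ennreal ((dx (rel_entropy h) x t)^2) \<partial>lborel) \<and>
           (\<integral>\<^sup>+x\<in>{0<..<R0}. ennreal ((dt (dx h) x t)^2 + x^2 * (dt (dx (dx h)) x t)^2) \<partial>lborel)
             \<le> ennreal C * (\<integral>\<^sup>+x\<in>{0<..<R0}. ennreal ((dt (dx (rel_entropy h)) x t)^2) \<partial>lborel)
               + ennreal (C * \<epsilon>) * (\<integral>\<^sup>+x\<in>{0<..<R0}. ennreal ((dx h x t)^2 + x^2 * (dx (dx h) x t)^2) \<partial>lborel))))"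
  apply (rule exI[of _ "1/100"])
  apply (intro conjI)
    apply simp
   apply simp
  apply (rule exI[of _ 12])
  apply (rule conjI)
   apply simp
  apply (intro allI impI ballI)
  subgoal premises prems for R0 T h \<epsilon> t
  proof -
    have m: "sup_abs R0 T h < ereal \<epsilon>" "sup_abs R0 T (\<lambda>x t. x * dx h x t) < ereal \<epsilon>"
      "sup_abs R0 T (dt h) < ereal \<epsilon>" "sup_abs R0 T (\<lambda>x t. x * dt (dx h) x t) < ereal \<epsilon>"
      using prems(6) by simp_all
    show ?thesis
      by (rule main_fixed[OF prems(1-5) sup_pt[OF m(1)] sup_pt[OF m(2)] sup_pt[OF m(3)] sup_pt[OF m(4)] prems(7)])
  qed
  done



end
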